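(* Let $G$ be a directed acyclic graph with $n$ vertices, let $s,t\in V(G)$, and let $k=\operatorname{fvs}(G)$. Then the number of distinct directed $s$-$t$ paths in $G$ is at most $k^k n^{\mathcal{O}(k)}$.
   Context: $\operatorname{fvs}(G)$ denotes the minimum size of a feedback vertex set of the underlying undirected graph of $G$, i.e., the minimum number of vertices whose removal makes the underlying undirected graph a forest. *)

theory Defs
  imports Main
begin

definition dpaths :: "'a set \<Rightarrow> ('a \<times> 'a) set \<Rightarrow> 'a \<Rightarrow> 'a \<Rightarrow> 'a list set" where
  "dpaths V E s t = {p. p \<noteq> [] \<and> hd p = s \<and> last p = t \<and> distinct p \<and> set p \<subseteq> V \<and>
      (\<forall>i < length p - 1. (p ! i, p ! (i + 1)) \<in> E)}"

definition uadj :: "('a \<times> 'a) set \<Rightarrow> 'a \<Rightarrow> 'a \<Rightarrow> bool" where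
  "uadj E u v \<longleftrightarrow> (u, v) \<in> E \<or> (v, u) \<in> E"

definition ucycle :: "'a set \<Rightarrow> ('a \<times> 'a) set \<Rightarrow> 'a list \<Rightarrow> bool" where
  "ucycle V E c \<longleftrightarrow> length c \<ge> 3 \<and> distinct c \<and> set c \<subseteq> V \<and>
      (\<forall>i < length c. uadj E (c ! i) (c ! ((i + 1) mod length c)))"

definition is_uforest :: "'a set \<Rightarrow> ('a \<times> 'a) set \<Rightarrow> bool" where
  "is_uforest V E \<longleftrightarrow> \<not> (\<exists>c. ucycle V E c)"

definition fvs :: "'a set \<Rightarrow> ('a \<times> 'a) set \<Rightarrow> nat" where
  "fvs V E = Min {card X | X. X \<subseteq> V \<and> is_uforest (V - X) E}"

end

theory Submission
  imports Defs
begin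


lemma successively_nth:
  "successively P p \<longleftrightarrow> (\<forall>i < length p - 1. P (p ! i) (p ! (i + 1)))"
proof (induction P p rule: successively.induct)
  case (3 P x y xs)
  show ?case
  proof
    assume "successively P (x # y # xs)"
    then show "\<forall>i<length (x # y # xs) - 1. P ((x # y # xs) ! i) ((x # y # xs) ! (i + 1))"
      using 3 by (auto simp: nth_Cons split: nat.splits)
  next
    assume H: "\<forall>i<length (x # y # xs) - 1. P ((x # y # xs) ! i) ((x # y # xs) ! (i + 1))"
    have "P x y" using H[rule_format, of 0] by simp
    moreover have "\<forall>i<length (y # xs) - 1. P ((y # xs) ! i) ((y # xs) ! (i + 1))"
    proof (intro allI impI)
      fix i assume "i < length (y # xs) - 1"
      then show "P ((y # xs) ! i) ((y # xs) ! (i + 1))" using H[rule_format, of "Suc i"] by simp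
    qed
    ultimately show "successively P (x # y # xs)" using 3 by simp
  qed
qed auto

lemma ucycleI:
  assumes "length c \<ge> 3" "distinct c" "set c \<subseteq> V" "successively (uadj E) c"
    "uadj E (last c) (hd c)"
  shows "ucycle V E c"
  unfolding ucycle_def
proof (intro conjI allI impI)
  fix i assume i: "i < length c"
  show "uadj E (c ! i) (c ! ((i + 1) mod length c))"
  proof (cases "i + 1 < length c")
    case True
    then show ?thesis using assms(4) unfolding successively_nth by auto
  next
    case False
    then have "i = length c - 1" using i by auto
    moreover have "c \<noteq> []" using assms(1) by auto
    ultimately show ?thesis using assms(5) False i
      by (simp add: last_conv_nth hd_conv_nth)
  qed
qed (use assms in auto)

lemma uadj_sym: "uadj E u v \<longleftrightarrow> uadj E v u"
  unfolding uadj_def by auto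

lemma forest_unique:
  assumes "is_uforest W E"
  shows "successively (uadj E) p \<Longrightarrow> successively (uadj E) q \<Longrightarrow> set p \<subseteq> W \<Longrightarrow> set q \<subseteq> W
    \<Longrightarrow> distinct p \<Longrightarrow> distinct q \<Longrightarrow> p \<noteq> [] \<Longrightarrow> q \<noteq> [] \<Longrightarrow> hd p = hd q \<Longrightarrow> last p = last q
    \<Longrightarrow> p = q"
proof (induction p arbitrary: q)
  case Nil
  then show ?case by simp
next
  case (Cons a p')
  obtain q' where q: "q = a # q'" using Cons.prems by (cases q) auto
  show ?case
  proof (cases "p' = []")
    case True
    then have "last q = a" using Cons.prems by simp
    then show ?thesis using q Cons.prems(6) True by (cases q' rule: rev_cases) auto
  next
    case pne: False
    show ?thesis
    proof (cases "q' = []")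
      case True
      then have "last (a # p') = a" using Cons.prems q by simp
      then show ?thesis using Cons.prems(5) pne by (cases p' rule: rev_cases) auto
    next
      case qne: False
      show ?thesis
      proof (cases "hd p' = hd q'")
        case True
        have "p' = q'"
          apply (rule Cons.IH)
          using Cons.prems q pne qne True by (auto simp: successively_Cons)
        then show ?thesis using q by simp
      next
        case hne: False
        have "last p' \<in> set q'" using Cons.prems q pne qne by simp
        then have "\<exists>x\<in>set p'. x \<in> set q'" using pne by auto
        then obtain P1 w P2 where pw: "p' = P1 @ w # P2" "w \<in> set q'" "\<forall>y\<in>set P1. y \<notin> set q'"
          using split_list_first_prop[of p' "\<lambda>x. x \<in> set q'"] by blast
        obtain Q1 Q2 where qw: "q' = Q1 @ w # Q2" using pw(2) split_list by metis
        define c where "c = a # P1 @ [w] @ rev Q1"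
        have sp: "successively (uadj E) (a # p')" by fact
        have sq: "successively (uadj E) (a # q')" using Cons.prems q by simp
        have dp: "distinct (a # p')" by fact
        have dq: "distinct (a # q')" using Cons.prems q by simp
        have len: "length c \<ge> 3"
        proof -
          have "P1 \<noteq> [] \<or> Q1 \<noteq> []" using hne pw qw by auto
          then show ?thesis unfolding c_def by (cases P1; cases Q1) auto
        qed
        have dist: "distinct c"
        proof -
          have d1: "a \<notin> set P1" "a \<noteq> w" "distinct P1" "w \<notin> set P1"
            using dp pw(1) by auto
          have d2: "a \<notin> set Q1" "distinct Q1" "w \<notin> set Q1"
            using dq qw by auto
          have d3: "set P1 \<inter> set Q1 = {}" using pw(3) qw by auto
          show ?thesis unfolding c_def using d1 d2 d3 by auto
        qed
        have sub: "set c \<subseteq> W"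
        proof -
          have "set (a # p') \<subseteq> W" "set q' \<subseteq> W" using Cons.prems q by auto
          then show ?thesis unfolding c_def using pw(1) qw by auto
        qed
        have s1: "successively (uadj E) (a # P1 @ [w])"
        proof -
          have "a # p' = (a # P1 @ [w]) @ P2" by (simp add: pw(1))
          then show ?thesis using sp successively_append_iff by metis
        qed
        have aq: "a # q' = (a # Q1) @ (w # Q2)" by (simp add: qw)
        have sQ: "successively (uadj E) (a # Q1)" using sq aq successively_append_iff by metis
        have s2: "successively (uadj E) (rev Q1)"
        proof -
          have "successively (uadj E) Q1" using sQ by (cases Q1) (auto simp: successively_Cons)
          then have "successively (\<lambda>x y. uadj E y x) Q1"
            by (rule successively_mono) (simp add: uadj_sym)
          then show ?thesis by simp
        qed
        have succ: "successively (uadj E) c"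
        proof (cases "Q1 = []")
          case True then show ?thesis using s1 unfolding c_def by simp
        next
          case False
          have "uadj E (last (a # Q1)) (hd (w # Q2))" using sq aq successively_append_iff
            by (metis list.distinct(1))
          then have "uadj E (last Q1) w" using False by simp
          then have l: "uadj E (last (a # P1 @ [w])) (hd (rev Q1))" using False
            by (simp add: hd_rev uadj_sym)
          have "c = (a # P1 @ [w]) @ rev Q1" unfolding c_def by simp
          then show ?thesis using s1 s2 l successively_append_iff by metis
        qed
        have cl: "uadj E (last c) (hd c)"
        proof (cases "Q1 = []")
          case True
          then have "hd q' = w" using qw by simp
          then have "uadj E a w" using sq qne by (cases q') auto
          then show ?thesis using True unfolding c_def uadj_def by auto
        next
          case False
          then have "hd q' = hd Q1" using qw by simp
          then have "uadj E a (hd Q1)" using sq qne by (cases q') auto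
          then show ?thesis using False unfolding c_def uadj_def by (auto simp: last_rev)
        qed
        have "ucycle W E c" using ucycleI[OF len dist sub succ cl] .
        then show ?thesis using assms unfolding is_uforest_def by blast
      qed
    qed
  qed
qed



definition enc :: "nat list \<Rightarrow> (nat \<times> nat) option" where
  "enc A = (if A = [] then None else Some (hd A, last A))"

function code :: "nat set \<Rightarrow> nat list \<Rightarrow> (nat + (nat \<times> nat) option) list" where
  "code X p = Inr (enc (takeWhile (\<lambda>v. v \<notin> X) p)) #
       (case dropWhile (\<lambda>v. v \<notin> X) p of [] \<Rightarrow> [] | x # r \<Rightarrow> Inl x # code X r)"
  by pat_completeness auto
termination
proof (relation "measure (\<lambda>(X, p). length p)")
  fix X p x r
  assume "dropWhile (\<lambda>v. v \<notin> X) p = x # r"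
  then have "length (x # r) \<le> length p" by (metis length_dropWhile_le)
  then show "((X, r), X, p) \<in> measure (\<lambda>(X, p). length p)" by simp
qed simp

declare code.simps[simp del]

lemma code_Nil: "dropWhile (\<lambda>v. v \<notin> X) p = [] \<Longrightarrow>
   code X p = [Inr (enc (takeWhile (\<lambda>v. v \<notin> X) p))]"
  by (simp only: code.simps[of X p] list.case)

lemma code_Cons: "dropWhile (\<lambda>v. v \<notin> X) p = x # r \<Longrightarrow>
   code X p = Inr (enc (takeWhile (\<lambda>v. v \<notin> X) p)) # Inl x # code X r"
  by (subst code.simps) simp


lemma code_length:
  "length (code X p) = 2 * length (filter (\<lambda>v. v \<in> X) p) + 1"
proof (induction X p rule: code.induct)
  case (1 X p)
  let ?A = "takeWhile (\<lambda>v. v \<notin> X) p"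
  let ?R = "dropWhile (\<lambda>v. v \<notin> X) p"
  have split: "p = ?A @ ?R" by simp
  have fA: "filter (\<lambda>v. v \<in> X) ?A = []"
    by (auto simp add: filter_empty_conv dest: set_takeWhileD)
  show ?case
  proof (cases ?R)
    case Nil
    then have "filter (\<lambda>v. v \<in> X) p = []" using fA split by (metis append_Nil2)
    then show ?thesis using code_Nil[OF Nil] by simp
  next
    case (Cons x r)
    have xX: "x \<in> X" using Cons by (metis dropWhile_eq_Cons_conv)
    have "filter (\<lambda>v. v \<in> X) p = filter (\<lambda>v. v \<in> X) ?A @ filter (\<lambda>v. v \<in> X) (x # r)"
      using split Cons by (metis filter_append)
    then have "filter (\<lambda>v. v \<in> X) p = x # filter (\<lambda>v. v \<in> X) r"
      using fA xX by simp
    then show ?thesis using 1[OF Cons] code_Cons[OF Cons] by simp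
  qed
qed

lemma code_set:
  "set p \<subseteq> V \<Longrightarrow> set (code X p) \<subseteq> Inl ` X \<union> Inr ` ({None} \<union> Some ` (V \<times> V))"
proof (induction X p rule: code.induct)
  case (1 X p)
  let ?A = "takeWhile (\<lambda>v. v \<notin> X) p"
  let ?R = "dropWhile (\<lambda>v. v \<notin> X) p"
  have split: "p = ?A @ ?R" by simp
  have h: "Inr (enc ?A) \<in> Inl ` X \<union> Inr ` ({None} \<union> Some ` (V \<times> V))"
  proof (cases "?A = []")
    case False
    then have "hd ?A \<in> V" "last ?A \<in> V" using 1(2) split
      by (metis hd_in_set last_in_set in_mono set_takeWhileD)+
    then show ?thesis using False unfolding enc_def by auto
  qed (simp add: enc_def)
  show ?case
  proof (cases ?R)
    case Nil
    then show ?thesis using h code_Nil[OF Nil] by simp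
  next
    case (Cons x r)
    have xX: "x \<in> X" using Cons by (metis dropWhile_eq_Cons_conv)
    have "set r \<subseteq> V" using 1(2) split Cons
      by (metis set_append le_sup_iff set_subset_Cons subset_trans)
    then have "set (code X r) \<subseteq> Inl ` X \<union> Inr ` ({None} \<union> Some ` (V \<times> V))"
      using 1(1)[OF Cons] by blast
    then show ?thesis using code_Cons[OF Cons] h xX by simp
  qed
qed

lemma case_nil_aux: "(case S of [] \<Rightarrow> [] | x # r \<Rightarrow> Inl x # code X r) = [] \<Longrightarrow> S = []"
  by (cases S) auto

lemma case_cons_aux: "(case S of [] \<Rightarrow> [] | x # r \<Rightarrow> Inl x # code X r) = Inl y # c \<Longrightarrow>
   \<exists>r'. S = y # r' \<and> c = code X r'"
  by (cases S) auto

lemma code_inj: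
  shows "code X p = code X q \<Longrightarrow> successively (\<lambda>u v. (u, v) \<in> E) p \<Longrightarrow>
    successively (\<lambda>u v. (u, v) \<in> E) q \<Longrightarrow> distinct p \<Longrightarrow> distinct q \<Longrightarrow>
    set p \<subseteq> V \<Longrightarrow> set q \<subseteq> V \<Longrightarrow> is_uforest (V - X) E \<Longrightarrow> p = q"
proof (induction X p arbitrary: q rule: code.induct)
  case (1 X p)
  let ?A = "takeWhile (\<lambda>v. v \<notin> X) p"
  let ?R = "dropWhile (\<lambda>v. v \<notin> X) p"
  let ?B = "takeWhile (\<lambda>v. v \<notin> X) q"
  let ?S = "dropWhile (\<lambda>v. v \<notin> X) q"
  have F: "is_uforest (V - X) E" by fact
  have splitp: "p = ?A @ ?R" by simp
  have splitq: "q = ?B @ ?S" by simp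
  have eq: "Inr (enc ?A) # (case ?R of [] \<Rightarrow> [] | x # r \<Rightarrow> Inl x # code X r) =
       Inr (enc ?B) # (case ?S of [] \<Rightarrow> [] | x # r \<Rightarrow> Inl x # code X r)"
    using 1(2) by (metis code.simps)
  then have encAB: "enc ?A = enc ?B"
    and tl: "(case ?R of [] \<Rightarrow> [] | x # r \<Rightarrow> Inl x # code X r) =
       (case ?S of [] \<Rightarrow> [] | x # r \<Rightarrow> Inl x # code X r)" by simp_all
  have sA: "successively (\<lambda>u v. (u, v) \<in> E) ?A" "successively (\<lambda>u v. (u, v) \<in> E) ?R"
    using 1(3) splitp successively_append_iff by metis+
  have sB: "successively (\<lambda>u v. (u, v) \<in> E) ?B" "successively (\<lambda>u v. (u, v) \<in> E) ?S"
    using 1(4) splitq successively_append_iff by metis+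
  have AB: "?A = ?B"
  proof (cases "?A = []")
    case True
    then show ?thesis using encAB unfolding enc_def by (auto split: if_splits)
  next
    case False
    then have Bne: "?B \<noteq> []" and hl: "hd ?A = hd ?B" "last ?A = last ?B"
      using encAB unfolding enc_def by (auto split: if_splits)
    have h1: "successively (uadj E) ?A" using sA(1) by (rule successively_mono) (simp add: uadj_def)
    have h2: "successively (uadj E) ?B" using sB(1) by (rule successively_mono) (simp add: uadj_def)
    have h3: "set ?A \<subseteq> V - X" using 1(7) by (auto dest: set_takeWhileD)
    have h4: "set ?B \<subseteq> V - X" using 1(8) by (auto dest: set_takeWhileD)
    have h5: "distinct ?A" using 1(5) splitp distinct_append by metis
    have h6: "distinct ?B" using 1(6) splitq distinct_append by metis
    show ?thesis using forest_unique[OF F h1 h2 h3 h4 h5 h6 False Bne hl] .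
  qed
  have RS: "?R = ?S"
  proof (cases ?R)
    case Nil
    then have "(case ?S of [] \<Rightarrow> [] | x # r \<Rightarrow> Inl x # code X r) = []"
      using tl by (simp only: list.case)
    then have "?S = []" using case_nil_aux by blast
    then show ?thesis using Nil by (simp only:)
  next
    case (Cons x r)
    then have "(case ?S of [] \<Rightarrow> [] | x # r \<Rightarrow> Inl x # code X r) = Inl x # code X r"
      using tl by (simp only: list.case)
    then obtain r' where S: "?S = x # r'" and cr: "code X r = code X r'"
      using case_cons_aux by metis
    have dR: "distinct ?R" using 1(5) splitp distinct_append by metis
    have dS: "distinct ?S" using 1(6) splitq distinct_append by metis
    have "r = r'"
    proof (rule 1(1)[OF Cons cr])
      show "successively (\<lambda>u v. (u, v) \<in> E) r" using sA(2) Cons by (cases r) simp_all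
      show "successively (\<lambda>u v. (u, v) \<in> E) r'" using sB(2) S by (cases r') simp_all
      show "distinct r" using dR Cons by simp
      show "distinct r'" using dS S by simp
      show "set r \<subseteq> V" using 1(7) set_dropWhileD Cons by (metis list.set_intros(2) subsetI subsetD)
      show "set r' \<subseteq> V" using 1(8) set_dropWhileD S by (metis list.set_intros(2) subsetI subsetD)
      show "is_uforest (V - X) E" by fact
    qed
    then show ?thesis using Cons S by simp
  qed
  show ?case using splitp splitq AB RS by metis
qed



lemma dpathsD:
  assumes "p \<in> dpaths V E s t"
  shows "successively (\<lambda>u v. (u, v) \<in> E) p" "distinct p" "set p \<subseteq> V" "p \<noteq> []"
    "hd p = s" "last p = t"
  using assms unfolding dpaths_def successively_nth by auto

lemma uforest_empty: "is_uforest {} E"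
  unfolding is_uforest_def ucycle_def by auto

lemma fvs_witness:
  assumes "finite V"
  shows "\<exists>X \<subseteq> V. is_uforest (V - X) E \<and> card X = fvs V E"
proof -
  let ?S = "{card X | X. X \<subseteq> V \<and> is_uforest (V - X) E}"
  have "?S \<subseteq> card ` Pow V" by auto
  then have fin: "finite ?S" using assms by (meson finite_Pow_iff finite_imageI finite_subset)
  have "is_uforest (V - V) E" using uforest_empty by simp
  then have "card V \<in> ?S" by blast
  then have "Min ?S \<in> ?S" using fin by (intro Min_in) auto
  then show ?thesis unfolding fvs_def by auto
qed

lemma fvs_pos:
  assumes "finite V" "fvs V E \<ge> 1"
  shows "card V \<ge> 3"
proof -
  let ?S = "{card X | X. X \<subseteq> V \<and> is_uforest (V - X) E}"
  have "?S \<subseteq> card ` Pow V" by auto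
  then have fin: "finite ?S" using assms by (meson finite_Pow_iff finite_imageI finite_subset)
  have "\<not> is_uforest V E"
  proof
    assume "is_uforest V E"
    then have "0 \<in> ?S" by (metis (mono_tags, lifting) Diff_empty card.empty empty_subsetI mem_Collect_eq)
    then have "Min ?S \<le> 0" using fin by (intro Min_le) auto
    then show False using assms(2) unfolding fvs_def by simp
  qed
  then obtain c where c: "ucycle V E c" unfolding is_uforest_def by blast
  then have "3 \<le> length c" "distinct c" "set c \<subseteq> V" unfolding ucycle_def by auto
  then show ?thesis using assms(1) by (metis card_mono distinct_card order_trans)
qed

lemma arith1:
  fixes n k :: nat
  assumes "n \<ge> 3" "k \<le> n"
  shows "k + (1 + n * n) \<le> n ^ 3"
proof -
  have "n ^ 3 = n * (n * n)" by (simp add: power3_eq_cube)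
  also have "\<dots> \<ge> 3 * (n * n)" using assms(1) by simp
  finally have a: "3 * (n * n) \<le> n ^ 3" .
  have "n * n \<ge> 3 * n" using assms(1) by simp
  then show ?thesis using a assms by linarith
qed

lemma arith2:
  fixes n k :: nat
  assumes "n \<ge> 3" "k \<ge> 1" "k \<le> n"
  shows "(2 * k + 2) * (n ^ 3) ^ (2 * k + 1) \<le> k ^ k * n ^ (12 * k)"
proof -
  have e3: "3 * (2 * k + 2) = 6 * k + 6" by simp
  have "n * n \<ge> 3 * n" using assms(1) by simp
  then have "2 * k + 2 \<le> n ^ 3" using arith1[OF assms(1,3)] assms by linarith
  then have "(2 * k + 2) * (n ^ 3) ^ (2 * k + 1) \<le> n ^ 3 * (n ^ 3) ^ (2 * k + 1)"
    by (rule mult_right_mono) simp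
  also have "\<dots> = (n ^ 3) ^ (2 * k + 2)" by simp
  also have "\<dots> = n ^ (3 * (2 * k + 2))" by (rule power_mult[symmetric])
  also have "\<dots> = n ^ (6 * k + 6)" using e3 by (simp only:)
  also have "\<dots> \<le> n ^ (12 * k)" using assms by (intro power_increasing) auto
  also have "\<dots> \<le> k ^ k * n ^ (12 * k)" using assms(2) by simp
  finally show ?thesis .
qed

theorem lemma2:
  "\<exists>c::nat. \<forall>(V::nat set) (E::(nat \<times> nat) set) s t.
     finite V \<longrightarrow> E \<subseteq> V \<times> V \<longrightarrow> acyclic E \<longrightarrow> s \<in> V \<longrightarrow> t \<in> V \<longrightarrow>
     card (dpaths V E s t) \<le> fvs V E ^ fvs V E * card V ^ (c * fvs V E)"
proof (intro exI[of _ 12] allI impI)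
  fix V :: "nat set" and E :: "(nat \<times> nat) set" and s t
  assume fin: "finite V"
  let ?D = "dpaths V E s t"
  let ?k = "fvs V E"
  let ?n = "card V"
  obtain X where X: "X \<subseteq> V" "is_uforest (V - X) E" "card X = ?k"
    using fvs_witness[OF fin] by blast
  have finX: "finite X" using X(1) fin finite_subset by blast
  show "card ?D \<le> ?k ^ ?k * ?n ^ (12 * ?k)"
  proof (cases "?k = 0")
    case True
    then have "X = {}" using X(3) finX by simp
    then have F: "is_uforest V E" using X(2) by simp
    have "\<forall>p\<in>?D. \<forall>q\<in>?D. p = q"
    proof (intro ballI)
      fix p q assume p: "p \<in> ?D" and q: "q \<in> ?D"
      have sp: "successively (uadj E) p" using dpathsD(1)[OF p]
        by (rule successively_mono) (simp add: uadj_def)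
      have sq: "successively (uadj E) q" using dpathsD(1)[OF q]
        by (rule successively_mono) (simp add: uadj_def)
      show "p = q" using forest_unique[OF F sp sq] dpathsD[OF p] dpathsD[OF q] by simp
    qed
    then have "card ?D \<le> 1"
      by (cases "finite ?D") (simp_all add: card_le_Suc0_iff_eq)
    then show ?thesis using True by simp
  next
    case False
    then have n3: "?n \<ge> 3" using fvs_pos[OF fin, of E] by simp
    have kn: "?k \<le> ?n" using X fin by (metis card_mono)
    define \<Sigma> where "\<Sigma> = Inl ` X \<union> Inr ` ({None} \<union> Some ` (V \<times> V))"
    have finS: "finite \<Sigma>" unfolding \<Sigma>_def using fin finX by simp
    have cS: "card \<Sigma> \<le> ?k + (1 + ?n * ?n)"
    proof -
      have c1: "card (Inl ` X :: (nat + (nat \<times> nat) option) set) \<le> card X"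
        by (rule card_image_le[OF finX])
      have c2: "card (Some ` (V \<times> V)) \<le> ?n * ?n"
        using card_image_le[of "V \<times> V" Some] fin by (simp add: card_cartesian_product)
      have c3: "card ({None} \<union> Some ` (V \<times> V)) \<le> 1 + card (Some ` (V \<times> V))"
        using card_Un_le[of "{None}" "Some ` (V \<times> V)"] by simp
      have c4: "card (Inr ` ({None} \<union> Some ` (V \<times> V)) :: (nat + (nat \<times> nat) option) set)
          \<le> card ({None} \<union> Some ` (V \<times> V))"
        by (rule card_image_le) (simp add: fin)
      have "card \<Sigma> \<le> card (Inl ` X :: (nat + (nat \<times> nat) option) set)
          + card (Inr ` ({None} \<union> Some ` (V \<times> V)) :: (nat + (nat \<times> nat) option) set)"
        unfolding \<Sigma>_def by (rule card_Un_le)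
      then show ?thesis using c1 c2 c3 c4 X(3) by linarith
    qed
    let ?L = "{xs. set xs \<subseteq> \<Sigma> \<and> length xs \<le> 2 * ?k + 1}"
    have inj: "inj_on (code X) ?D"
    proof (rule inj_onI)
      fix p q assume p: "p \<in> ?D" and q: "q \<in> ?D" and e: "code X p = code X q"
      show "p = q" using code_inj[OF e dpathsD(1)[OF p] dpathsD(1)[OF q] dpathsD(2)[OF p]
        dpathsD(2)[OF q] dpathsD(3)[OF p] dpathsD(3)[OF q] X(2)] .
    qed
    have sub: "code X ` ?D \<subseteq> ?L"
    proof
      fix c assume "c \<in> code X ` ?D"
      then obtain p where p: "p \<in> ?D" and c: "c = code X p" by blast
      have "set c \<subseteq> \<Sigma>" using code_set[OF dpathsD(3)[OF p]] c unfolding \<Sigma>_def by simp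
      moreover have "length (filter (\<lambda>v. v \<in> X) p) \<le> ?k"
      proof -
        have "distinct (filter (\<lambda>v. v \<in> X) p)" using dpathsD(2)[OF p] by simp
        then have "length (filter (\<lambda>v. v \<in> X) p) = card (set (filter (\<lambda>v. v \<in> X) p))"
          by (metis distinct_card)
        also have "\<dots> \<le> card X" by (intro card_mono finX) auto
        finally show ?thesis using X(3) by simp
      qed
      then have "length c \<le> 2 * ?k + 1" using code_length[of X p] c by simp
      ultimately show "c \<in> ?L" by simp
    qed
    have "card ?D = card (code X ` ?D)" using inj by (simp add: card_image)
    also have "\<dots> \<le> card ?L" using sub finite_lists_length_le[OF finS] by (rule card_mono[rotated])
    also have "\<dots> = (\<Sum>i\<le>2 * ?k + 1. card \<Sigma> ^ i)" by (rule card_lists_length_le[OF finS])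
    also have "\<dots> \<le> (\<Sum>i\<le>2 * ?k + 1. (?n ^ 3) ^ (2 * ?k + 1))"
    proof (rule sum_mono)
      fix i assume "i \<in> {..2 * ?k + 1}"
      then have i: "i \<le> 2 * ?k + 1" by simp
      have "card \<Sigma> \<le> ?n ^ 3" using cS arith1[OF n3 kn] by linarith
      then have "card \<Sigma> ^ i \<le> (?n ^ 3) ^ i" by (rule power_mono) simp
      also have "\<dots> \<le> (?n ^ 3) ^ (2 * ?k + 1)" using n3 i by (intro power_increasing) auto
      finally show "card \<Sigma> ^ i \<le> (?n ^ 3) ^ (2 * ?k + 1)" .
    qed
    also have "\<dots> = (2 * ?k + 2) * (?n ^ 3) ^ (2 * ?k + 1)" by simp
    also have "\<dots> \<le> ?k ^ ?k * ?n ^ (12 * ?k)" using arith2[OF n3 _ kn] False by simp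
    finally show ?thesis .
  qed
qed


end
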